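(* Let $0\le a\le b\le1$, and in $l_\infty^2$ let $H_1=\{(\xi_1,\xi_2):\xi_2\ge -a\xi_1\}$ and $H_2=\{(\xi_1,\xi_2):\xi_2\le b\xi_1\}$ with the restricted metrics. Let $X$ be the gluing of $H_1$ and $H_2$ along $\mathbb{R}$ via the isometries $\xi\mapsto(\xi,-a\xi)\in H_1$ and $\xi\mapsto(\xi,b\xi)\in H_2$ (i.e. identifying $(\xi,-a\xi)$ with $(\xi,b\xi)$). Then $X$ is hyperconvex if and only if $a=b=0$ or $a=b=1$.
   Context: $l_\infty^2$ is $\mathbb{R}^2$ with the metric $d((\xi_1,\xi_2),(\eta_1,\eta_2))=\max(|\xi_1-\eta_1|,|\xi_2-\eta_2|)$. A metric space is hyperconvex if every collection of closed balls $\{B(x_i,r_i)\}$ with $d(x_i,x_j)\le r_i+r_j$ has non-empty intersection. The gluing of $X_1,X_2$ along $A$ via isometric embeddings $\varphi_k\colon A\to X_k$ with closed images is $X_1\sqcup X_2/(\varphi_1(a)\sim\varphi_2(a))$ with metric $d_k$ on $X_k$ and $d(x,y)=\inf_{a\in A}\{d_1(x,\varphi_1(a))+d_2(\varphi_2(a),y)\}$ for $x\in X_1,y\in X_2$. *)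

theory Defs
  imports Complex_Main
begin

definition hyperconvex :: "'a set \<Rightarrow> ('a \<Rightarrow> 'a \<Rightarrow> real) \<Rightarrow> bool" where
  "hyperconvex S d \<longleftrightarrow>
     (\<forall>F \<subseteq> S \<times> (UNIV :: real set).
        (\<forall>(x, r) \<in> F. \<forall>(y, s) \<in> F. d x y \<le> r + s) \<longrightarrow>
        (\<exists>z \<in> S. \<forall>(x, r) \<in> F. d x z \<le> r))"

definition linf_dist :: "real \<times> real \<Rightarrow> real \<times> real \<Rightarrow> real" where
  "linf_dist p q = max \<bar>fst p - fst q\<bar> \<bar>snd p - snd q\<bar>"

definition glue_carrier :: "'a set \<Rightarrow> 'b set \<Rightarrow> ('a + 'b) set" where
  "glue_carrier X1 X2 = Inl ` X1 \<union> Inr ` X2"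

fun glue_pdist :: "('a \<Rightarrow> 'a \<Rightarrow> real) \<Rightarrow> ('b \<Rightarrow> 'b \<Rightarrow> real) \<Rightarrow> 'c set \<Rightarrow>
    ('c \<Rightarrow> 'a) \<Rightarrow> ('c \<Rightarrow> 'b) \<Rightarrow> ('a + 'b) \<Rightarrow> ('a + 'b) \<Rightarrow> real" where
  "glue_pdist d1 d2 A \<phi>1 \<phi>2 (Inl x) (Inl y) = d1 x y"
| "glue_pdist d1 d2 A \<phi>1 \<phi>2 (Inr x) (Inr y) = d2 x y"
| "glue_pdist d1 d2 A \<phi>1 \<phi>2 (Inl x) (Inr y) = (INF a\<in>A. d1 x (\<phi>1 a) + d2 (\<phi>2 a) y)"
| "glue_pdist d1 d2 A \<phi>1 \<phi>2 (Inr y) (Inl x) = (INF a\<in>A. d1 x (\<phi>1 a) + d2 (\<phi>2 a) y)"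

definition glue_rel :: "'a set \<Rightarrow> 'b set \<Rightarrow> 'c set \<Rightarrow> ('c \<Rightarrow> 'a) \<Rightarrow> ('c \<Rightarrow> 'b) \<Rightarrow>
    (('a + 'b) \<times> ('a + 'b)) set" where
  "glue_rel X1 X2 A \<phi>1 \<phi>2 =
     {(u, v). u \<in> glue_carrier X1 X2 \<and> v \<in> glue_carrier X1 X2 \<and>
        (u = v \<or> (\<exists>a\<in>A. u = Inl (\<phi>1 a) \<and> v = Inr (\<phi>2 a))
               \<or> (\<exists>a\<in>A. u = Inr (\<phi>2 a) \<and> v = Inl (\<phi>1 a)))}"

definition glue_space :: "'a set \<Rightarrow> 'b set \<Rightarrow> 'c set \<Rightarrow> ('c \<Rightarrow> 'a) \<Rightarrow> ('c \<Rightarrow> 'b) \<Rightarrow>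
    ('a + 'b) set set" where
  "glue_space X1 X2 A \<phi>1 \<phi>2 = glue_carrier X1 X2 // glue_rel X1 X2 A \<phi>1 \<phi>2"

definition glue_dist :: "('a \<Rightarrow> 'a \<Rightarrow> real) \<Rightarrow> ('b \<Rightarrow> 'b \<Rightarrow> real) \<Rightarrow> 'c set \<Rightarrow>
    ('c \<Rightarrow> 'a) \<Rightarrow> ('c \<Rightarrow> 'b) \<Rightarrow> ('a + 'b) set \<Rightarrow> ('a + 'b) set \<Rightarrow> real" where
  "glue_dist d1 d2 A \<phi>1 \<phi>2 P Q =
     glue_pdist d1 d2 A \<phi>1 \<phi>2 (SOME p. p \<in> P) (SOME q. q \<in> Q)"

end

theory Submission
  imports Defs
begin


lemma linf_sym: "linf_dist x y = linf_dist y x"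
  unfolding linf_dist_def by (simp add: abs_minus_commute)

lemma linf_tri: "linf_dist x z \<le> linf_dist x y + linf_dist y z"
proof -
  have 1: "\<bar>fst x - fst z\<bar> \<le> \<bar>fst x - fst y\<bar> + \<bar>fst y - fst z\<bar>" by arith
  have 2: "\<bar>snd x - snd z\<bar> \<le> \<bar>snd x - snd y\<bar> + \<bar>snd y - snd z\<bar>" by arith
  have "\<bar>fst x - fst y\<bar> + \<bar>fst y - fst z\<bar> \<le> linf_dist x y + linf_dist y z"
    unfolding linf_dist_def by (intro add_mono) auto
  moreover have "\<bar>snd x - snd y\<bar> + \<bar>snd y - snd z\<bar> \<le> linf_dist x y + linf_dist y z"
    unfolding linf_dist_def by (intro add_mono) auto
  ultimately show ?thesis using 1 2 unfolding linf_dist_def[of x z] by simp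
qed

lemma linf_nonneg: "0 \<le> linf_dist x y"
  unfolding linf_dist_def by simp

lemma linf_self[simp]: "linf_dist x x = 0"
  unfolding linf_dist_def by simp

lemma linf_le_iff: "linf_dist x y \<le> r \<longleftrightarrow> \<bar>fst x - fst y\<bar> \<le> r \<and> \<bar>snd x - snd y\<bar> \<le> r"
  unfolding linf_dist_def by simp

lemma lin_bound:
  fixes al ga u v :: real
  assumes "\<bar>al\<bar> + \<bar>ga\<bar> \<le> 1"
  shows "al * u + ga * v \<le> max \<bar>u\<bar> \<bar>v\<bar>"
proof -
  have "al * u \<le> \<bar>al\<bar> * max \<bar>u\<bar> \<bar>v\<bar>"
  proof -
    have "al * u \<le> \<bar>al\<bar> * \<bar>u\<bar>" by (simp add: abs_mult[symmetric])
    also have "\<dots> \<le> \<bar>al\<bar> * max \<bar>u\<bar> \<bar>v\<bar>" by (intro mult_left_mono) auto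
    finally show ?thesis .
  qed
  moreover have "ga * v \<le> \<bar>ga\<bar> * max \<bar>u\<bar> \<bar>v\<bar>"
  proof -
    have "ga * v \<le> \<bar>ga\<bar> * \<bar>v\<bar>" by (simp add: abs_mult[symmetric])
    also have "\<dots> \<le> \<bar>ga\<bar> * max \<bar>u\<bar> \<bar>v\<bar>" by (intro mult_left_mono) auto
    finally show ?thesis .
  qed
  moreover have "(\<bar>al\<bar> + \<bar>ga\<bar>) * max \<bar>u\<bar> \<bar>v\<bar> \<le> 1 * max \<bar>u\<bar> \<bar>v\<bar>"
    using assms by (intro mult_right_mono) auto
  ultimately show ?thesis by (simp add: distrib_right)
qed

lemma inf_le: assumes "\<And>e. (0::real) \<le> f e" shows "(INF e. f e) \<le> f c"
  by (rule cINF_lower) (use assms in \<open>auto intro!: bdd_belowI[where m=0]\<close>)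

lemma inf_ge: assumes "\<And>e. (m::real) \<le> f e" shows "m \<le> (INF e. f e)"
  by (rule cINF_greatest) (use assms in auto)

lemma inf_eq: assumes "\<And>e. (m::real) \<le> f e" "f c = m" shows "(INF e. f e) = m"
proof (rule antisym)
  show "(INF e. f e) \<le> m" unfolding assms(2)[symmetric]
    by (rule cINF_lower) (use assms in \<open>auto intro!: bdd_belowI[where m=m]\<close>)
  show "m \<le> (INF e. f e)" by (rule inf_ge) (rule assms)
qed



lemma hc_transfer:
  assumes img: "E ` C = S" and dd: "\<And>u v. u \<in> C \<Longrightarrow> v \<in> C \<Longrightarrow> dC u v = dS (E u) (E v)"
  shows "hyperconvex C dC \<longleftrightarrow> hyperconvex S dS"
proof
  assume hC: "hyperconvex C dC"
  show "hyperconvex S dS" unfolding hyperconvex_def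
  proof (intro allI impI)
    fix F assume FS: "F \<subseteq> S \<times> (UNIV::real set)" and pw: "\<forall>(x, r)\<in>F. \<forall>(y, s)\<in>F. dS x y \<le> r + s"
    define F' where "F' = {(u, r). u \<in> C \<and> (E u, r) \<in> F}"
    have "F' \<subseteq> C \<times> (UNIV::real set)" unfolding F'_def by auto
    moreover have "\<forall>(x, r)\<in>F'. \<forall>(y, s)\<in>F'. dC x y \<le> r + s"
      using pw dd unfolding F'_def by fastforce
    ultimately obtain z where z: "z \<in> C" "\<forall>(x, r)\<in>F'. dC x z \<le> r"
      using hC unfolding hyperconvex_def by blast
    show "\<exists>z\<in>S. \<forall>(x, r)\<in>F. dS x z \<le> r"
    proof (intro bexI[of _ "E z"] ballI)
      show "E z \<in> S" using z img by blast
      fix p assume p: "p \<in> F"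
      obtain X r where p2: "p = (X, r)" by (cases p)
      with p FS have "X \<in> S" by auto
      then obtain u where u: "u \<in> C" "X = E u" using img by blast
      with p p2 have "(u, r) \<in> F'" unfolding F'_def by auto
      with z have "dC u z \<le> r" by auto
      with dd u z show "case p of (x, r) \<Rightarrow> dS x (E z) \<le> r" using p2 by auto
    qed
  qed
next
  assume hS: "hyperconvex S dS"
  show "hyperconvex C dC" unfolding hyperconvex_def
  proof (intro allI impI)
    fix F assume FC: "F \<subseteq> C \<times> (UNIV::real set)" and pw: "\<forall>(x, r)\<in>F. \<forall>(y, s)\<in>F. dC x y \<le> r + s"
    define F' where "F' = (\<lambda>(u, r). (E u, r)) ` F"
    have "F' \<subseteq> S \<times> (UNIV::real set)" unfolding F'_def using FC img by auto
    moreover have "\<forall>(x, r)\<in>F'. \<forall>(y, s)\<in>F'. dS x y \<le> r + s"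
      using pw dd FC unfolding F'_def by fastforce
    ultimately obtain Z where Z: "Z \<in> S" "\<forall>(x, r)\<in>F'. dS x Z \<le> r"
      using hS unfolding hyperconvex_def by blast
    then obtain z where z: "z \<in> C" "Z = E z" using img by blast
    show "\<exists>z\<in>C. \<forall>(x, r)\<in>F. dC x z \<le> r"
    proof (intro bexI[of _ z] ballI)
      show "z \<in> C" by fact
      fix p assume p: "p \<in> F"
      obtain u r where p2: "p = (u, r)" by (cases p)
      with p FC have "u \<in> C" by auto
      have "(E u, r) \<in> F'" using p p2 unfolding F'_def by force
      with Z z have "dS (E u) (E z) \<le> r" by auto
      with dd \<open>u \<in> C\<close> z show "case p of (x, r) \<Rightarrow> dC x z \<le> r" using p2 by auto
    qed
  qed
qed

lemma glue_hc:
  fixes d1 :: "'a \<Rightarrow> 'a \<Rightarrow> real" and d2 :: "'b \<Rightarrow> 'b \<Rightarrow> real"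
    and A :: "'c set" and p1 :: "'c \<Rightarrow> 'a" and p2 :: "'c \<Rightarrow> 'b" and X1 :: "'a set" and X2 :: "'b set"
  defines "pd \<equiv> glue_pdist d1 d2 A p1 p2" and "R \<equiv> glue_rel X1 X2 A p1 p2"
  assumes sym: "\<And>u v. pd u v = pd v u"
    and resp: "\<And>u v w. (u, v) \<in> R \<Longrightarrow> pd v w = pd u w"
  shows "hyperconvex (glue_space X1 X2 A p1 p2) (glue_dist d1 d2 A p1 p2)
         \<longleftrightarrow> hyperconvex (glue_carrier X1 X2) pd"
proof -
  have refl: "(u, u) \<in> R" if "u \<in> glue_carrier X1 X2" for u
    using that unfolding R_def glue_rel_def by auto
  have "hyperconvex (glue_carrier X1 X2) pd \<longleftrightarrow> hyperconvex (glue_space X1 X2 A p1 p2) (glue_dist d1 d2 A p1 p2)"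
  proof (rule hc_transfer[where E="\<lambda>u. R `` {u}"])
    show "(\<lambda>u. R `` {u}) ` glue_carrier X1 X2 = glue_space X1 X2 A p1 p2"
      unfolding glue_space_def quotient_def R_def by auto
    fix u v assume u: "u \<in> glue_carrier X1 X2" and v: "v \<in> glue_carrier X1 X2"
    define p where "p = (SOME p. p \<in> R `` {u})"
    define q where "q = (SOME q. q \<in> R `` {v})"
    have "p \<in> R `` {u}" unfolding p_def by (rule someI[of _ u]) (use refl u in auto)
    hence pu: "(u, p) \<in> R" by auto
    have "q \<in> R `` {v}" unfolding q_def by (rule someI[of _ v]) (use refl v in auto)
    hence qv: "(v, q) \<in> R" by auto
    have "pd p q = pd u q" using resp[OF pu] .
    also have "\<dots> = pd q u" by (rule sym)
    also have "\<dots> = pd v u" using resp[OF qv] .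
    also have "\<dots> = pd u v" by (rule sym)
    finally show "pd u v = glue_dist d1 d2 A p1 p2 (R `` {u}) (R `` {v})"
      unfolding glue_dist_def pd_def[symmetric] p_def[symmetric] q_def[symmetric] by simp
  qed
  thus ?thesis by simp
qed



definition pdab :: "real \<Rightarrow> real \<Rightarrow> (real \<times> real) + (real \<times> real) \<Rightarrow> (real \<times> real) + (real \<times> real) \<Rightarrow> real" where
  "pdab a b = glue_pdist linf_dist linf_dist (UNIV::real set) (\<lambda>\<xi>. (\<xi>, - a * \<xi>)) (\<lambda>\<xi>. (\<xi>, b * \<xi>))"

lemma pd_LL[simp]: "pdab a b (Inl x) (Inl y) = linf_dist x y" by (simp add: pdab_def)
lemma pd_RR[simp]: "pdab a b (Inr x) (Inr y) = linf_dist x y" by (simp add: pdab_def)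
lemma pd_LR: "pdab a b (Inl x) (Inr y) = (INF e. linf_dist x (e, -a*e) + linf_dist (e, b*e) y)"
  by (simp add: pdab_def)
lemma pd_RL: "pdab a b (Inr y) (Inl x) = pdab a b (Inl x) (Inr y)" by (simp add: pdab_def)

lemma pd_sym: "pdab a b u v = pdab a b v u"
  by (cases u; cases v) (auto simp: pd_RL linf_sym)

lemma iso1: assumes "0 \<le> a" "a \<le> 1" shows "linf_dist (c, -a*c) (e, -a*e) = \<bar>c - e\<bar>"
proof -
  have "-a*c - -a*e = a*(e-c)" by (simp add: algebra_simps)
  hence "\<bar>-a*c - -a*e\<bar> = a * \<bar>c - e\<bar>" using assms by (simp add: abs_mult abs_minus_commute)
  also have "\<dots> \<le> \<bar>c - e\<bar>" using assms by (simp add: mult_left_le_one_le)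
  finally show ?thesis unfolding linf_dist_def by simp
qed

lemma iso2: assumes "0 \<le> b" "b \<le> 1" shows "linf_dist (c, b*c) (e, b*e) = \<bar>c - e\<bar>"
proof -
  have "b*c - b*e = b*(c-e)" by (simp add: algebra_simps)
  hence "\<bar>b*c - b*e\<bar> = b * \<bar>c - e\<bar>" using assms by (simp add: abs_mult)
  also have "\<dots> \<le> \<bar>c - e\<bar>" using assms by (simp add: mult_left_le_one_le)
  finally show ?thesis unfolding linf_dist_def by simp
qed

lemma seam_L: assumes "0 \<le> a" "a \<le> 1" "0 \<le> b" "b \<le> 1"
  shows "pdab a b (Inr (c, b*c)) (Inl y) = linf_dist y (c, -a*c)"
  unfolding pd_RL pd_LR
proof (rule inf_eq[where c=c])
  fix e
  have "linf_dist y (c, -a*c) \<le> linf_dist y (e, -a*e) + linf_dist (e, -a*e) (c, -a*c)" by (rule linf_tri)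
  also have "linf_dist (e, -a*e) (c, -a*c) = linf_dist (e, b*e) (c, b*c)"
    using iso1[OF assms(1,2)] iso2[OF assms(3,4)] by simp
  finally show "linf_dist y (c, -a*c) \<le> linf_dist y (e, -a*e) + linf_dist (e, b*e) (c, b*c)" .
qed simp

lemma seam_R: assumes "0 \<le> a" "a \<le> 1" "0 \<le> b" "b \<le> 1"
  shows "pdab a b (Inl (c, -a*c)) (Inr y) = linf_dist (c, b*c) y"
  unfolding pd_LR
proof (rule inf_eq[where c=c])
  fix e
  have "linf_dist (c, b*c) y \<le> linf_dist (c, b*c) (e, b*e) + linf_dist (e, b*e) y" by (rule linf_tri)
  also have "linf_dist (c, b*c) (e, b*e) = linf_dist (c, -a*c) (e, -a*e)"
    using iso1[OF assms(1,2)] iso2[OF assms(3,4)] by simp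
  finally show "linf_dist (c, b*c) y \<le> linf_dist (c, -a*c) (e, -a*e) + linf_dist (e, b*e) y" .
qed simp

lemma seam: assumes "0 \<le> a" "a \<le> 1" "0 \<le> b" "b \<le> 1"
  shows "pdab a b (Inl (c, -a*c)) w = pdab a b (Inr (c, b*c)) w"
proof (cases w)
  case (Inl y)
  then show ?thesis using seam_L[OF assms, of c y] by (simp add: linf_sym)
next
  case (Inr y)
  then show ?thesis using seam_R[OF assms, of c y] by simp
qed

lemma resp: assumes "0 \<le> a" "a \<le> 1" "0 \<le> b" "b \<le> 1"
  and "(u, v) \<in> glue_rel X1 X2 (UNIV::real set) (\<lambda>\<xi>. (\<xi>, - a * \<xi>)) (\<lambda>\<xi>. (\<xi>, b * \<xi>))"
  shows "pdab a b v w = pdab a b u w"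
  using assms(5) seam[OF assms(1-4)] unfolding glue_rel_def by auto

lemma lip:
  assumes "\<bar>al\<bar> + \<bar>ga\<bar> \<le> 1" "\<bar>al'\<bar> + \<bar>ga'\<bar> \<le> 1" "al - a * ga = al' + b * ga'"
  shows "al * fst x + ga * snd x - (al' * fst y + ga' * snd y) \<le> pdab a b (Inl x) (Inr y)"
  unfolding pd_LR
proof (rule inf_ge)
  fix e
  have 1: "al * (fst x - e) + ga * (snd x - -a*e) \<le> linf_dist x (e, -a*e)"
    unfolding linf_dist_def using lin_bound[OF assms(1)] by simp
  have 2: "al' * (e - fst y) + ga' * (b*e - snd y) \<le> linf_dist (e, b*e) y"
    unfolding linf_dist_def using lin_bound[OF assms(2)] by simp
  have "al * fst x + ga * snd x - (al' * fst y + ga' * snd y)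
     = al * (fst x - e) + ga * (snd x - -a*e) + (al' * (e - fst y) + ga' * (b*e - snd y))
       + e * (al - a * ga - al' - b * ga')"
    by (simp add: algebra_simps)
  also have "e * (al - a * ga - al' - b * ga') = 0" using assms(3) by simp
  finally show "al * fst x + ga * snd x - (al' * fst y + ga' * snd y)
      \<le> linf_dist x (e, -a*e) + linf_dist (e, b*e) y" using 1 2 by linarith
qed

lemma pd_le: "pdab a b (Inl x) (Inr y) \<le> linf_dist x (e, -a*e) + linf_dist (e, b*e) y"
  unfolding pd_LR by (rule inf_le[where f="\<lambda>e. linf_dist x (e, -a*e) + linf_dist (e, b*e) y"])
    (simp add: add_nonneg_nonneg linf_nonneg)



lemma linf_hc: "hyperconvex (UNIV :: (real \<times> real) set) linf_dist"
  unfolding hyperconvex_def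
proof (intro allI impI)
  fix F :: "((real \<times> real) \<times> real) set"
  assume pw: "\<forall>(x, r)\<in>F. \<forall>(y, s)\<in>F. linf_dist x y \<le> r + s"
  show "\<exists>z\<in>UNIV. \<forall>(x, r)\<in>F. linf_dist x z \<le> r"
  proof (cases "F = {}")
    case True then show ?thesis by auto
  next
    case False
    then obtain y0 s0 where y0: "(y0, s0) \<in> F" by auto
    define S1 where "S1 = (\<lambda>(x, r). fst x - r) ` F"
    define S2 where "S2 = (\<lambda>(x, r). snd x - r) ` F"
    have b1: "fst x - r \<le> fst y0 + s0" and b2: "snd x - r \<le> snd y0 + s0" if "(x, r) \<in> F" for x r
      using pw that y0 unfolding linf_dist_def by fastforce+
    have u1: "fst y - s \<le> fst x + r" and u2: "snd y - s \<le> snd x + r" if "(x, r) \<in> F" "(y, s) \<in> F" for x r y s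
      using pw that unfolding linf_dist_def by fastforce+
    have bdd1: "bdd_above S1" unfolding S1_def using b1 by (auto intro!: bdd_aboveI[where M="fst y0 + s0"])
    have bdd2: "bdd_above S2" unfolding S2_def using b2 by (auto intro!: bdd_aboveI[where M="snd y0 + s0"])
    show ?thesis
    proof (intro bexI[of _ "(Sup S1, Sup S2)"] ballI)
      fix p assume p: "p \<in> F"
      obtain x r where p2: "p = (x, r)" by (cases p)
      have "fst x - r \<le> Sup S1" using p p2 bdd1 unfolding S1_def by (force intro: cSup_upper)
      moreover have "Sup S1 \<le> fst x + r" unfolding S1_def
      proof (rule cSUP_least)
        show "F \<noteq> {}" using p by auto
        fix q assume "q \<in> F"
        then show "(case q of (y, s) \<Rightarrow> fst y - s) \<le> fst x + r" using u1[of x r] p p2 by (cases q) auto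
      qed
      moreover have "snd x - r \<le> Sup S2" using p p2 bdd2 unfolding S2_def by (force intro: cSup_upper)
      moreover have "Sup S2 \<le> snd x + r" unfolding S2_def
      proof (rule cSUP_least)
        show "F \<noteq> {}" using p by auto
        fix q assume "q \<in> F"
        then show "(case q of (y, s) \<Rightarrow> snd y - s) \<le> snd x + r" using u2[of x r] p p2 by (cases q) auto
      qed
      ultimately show "case p of (x, r) \<Rightarrow> linf_dist x (Sup S1, Sup S2) \<le> r"
        using p2 unfolding linf_dist_def by auto
    qed simp
  qed
qed

lemma max_scale: "0 \<le> (t::real) \<Longrightarrow> max (t * A) (t * B) = t * max A B"
  by (simp add: max_mult_distrib_left)

lemma crossing:
  assumes hx: "- a * fst x \<le> snd x" and hw: "a * fst w + snd w \<le> 0"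
  shows "\<exists>e. linf_dist x (e, -a*e) + linf_dist (e, -a*e) w = linf_dist x w"
proof (cases "snd x + a * fst x = a * fst w + snd w")
  case True
  hence "snd x = -a * fst x" using hx hw by linarith
  hence "x = (fst x, -a * fst x)" by (metis prod.collapse)
  then obtain e where xe: "x = (e, -a*e)" by blast
  show ?thesis by (rule exI[of _ e]) (simp add: xe)
next
  case False
  define hX where "hX = snd x + a * fst x"
  define hW where "hW = a * fst w + snd w"
  have hX0: "0 \<le> hX" using hx unfolding hX_def by simp
  have hW0: "hW \<le> 0" using hw unfolding hW_def by simp
  have den: "0 < hX - hW" using False hX0 hW0 unfolding hX_def hW_def by linarith
  define t where "t = hX / (hX - hW)"
  have t0: "0 \<le> t" unfolding t_def using hX0 den by simp
  have t1: "t \<le> 1" unfolding t_def using hW0 den by (simp add: divide_le_eq)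
  define e where "e = fst x + t * (fst w - fst x)"
  define m2 where "m2 = snd x + t * (snd w - snd x)"
  have "m2 + a * e = hX + t * (hW - hX)" unfolding m2_def e_def hX_def hW_def by (simp add: algebra_simps)
  also have "t * (hW - hX) = - hX" unfolding t_def using den by (simp add: field_simps)
  finally have m2e: "m2 = -a * e" by simp
  have "linf_dist x (e, m2) = t * linf_dist x w"
  proof -
    have "fst x - e = t * (fst x - fst w)" unfolding e_def by (simp add: algebra_simps)
    hence "\<bar>fst x - e\<bar> = t * \<bar>fst x - fst w\<bar>" using t0 by (simp add: abs_mult)
    moreover have "snd x - m2 = t * (snd x - snd w)" unfolding m2_def by (simp add: algebra_simps)
    hence "\<bar>snd x - m2\<bar> = t * \<bar>snd x - snd w\<bar>" using t0 by (simp add: abs_mult)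
    ultimately show ?thesis unfolding linf_dist_def using max_scale[OF t0] by simp
  qed
  moreover have "linf_dist (e, m2) w = (1 - t) * linf_dist x w"
  proof -
    have t0': "0 \<le> 1 - t" using t1 by simp
    have "e - fst w = (1 - t) * (fst x - fst w)" unfolding e_def by (simp add: algebra_simps)
    hence "\<bar>e - fst w\<bar> = (1 - t) * \<bar>fst x - fst w\<bar>" using t0' by (simp add: abs_mult)
    moreover have "m2 - snd w = (1 - t) * (snd x - snd w)" unfolding m2_def by (simp add: algebra_simps)
    hence "\<bar>m2 - snd w\<bar> = (1 - t) * \<bar>snd x - snd w\<bar>" using t0' by (simp add: abs_mult)
    ultimately show ?thesis unfolding linf_dist_def using max_scale[OF t0'] by simp
  qed
  ultimately have "linf_dist x (e, m2) + linf_dist (e, m2) w = linf_dist x w"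
    by (simp add: algebra_simps)
  thus ?thesis using m2e by auto
qed



lemma fwd_generic:
  fixes g :: "real \<times> real \<Rightarrow> real \<times> real"
  assumes ab: "0 \<le> a" "a \<le> 1" "0 \<le> b" "b \<le> 1"
    and giso: "\<And>u v. linf_dist (g u) (g v) = linf_dist u v"
    and gseam: "\<And>e. g (e, b*e) = (e, -a*e)"
    and gside: "\<And>y. snd y \<le> b * fst y \<Longrightarrow> a * fst (g y) + snd (g y) \<le> 0"
    and gsurj: "\<And>v. a * fst v + snd v < 0 \<Longrightarrow> \<exists>y. snd y \<le> b * fst y \<and> g y = v"
  shows "hyperconvex (glue_carrier {p. snd p \<ge> - a * fst p} {p. snd p \<le> b * fst p}) (pdab a b)"
proof -
  let ?E = "case_sum id g"
  have cross: "pdab a b (Inl x) (Inr y) = linf_dist x (g y)"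
    if x: "- a * fst x \<le> snd x" and y: "snd y \<le> b * fst y" for x y
  proof -
    obtain c where c: "linf_dist x (c, -a*c) + linf_dist (c, -a*c) (g y) = linf_dist x (g y)"
      using crossing[OF x gside[OF y]] by blast
    show ?thesis unfolding pd_LR
    proof (rule inf_eq[where c=c])
      fix e
      have "linf_dist x (g y) \<le> linf_dist x (e, -a*e) + linf_dist (e, -a*e) (g y)" by (rule linf_tri)
      also have "linf_dist (e, -a*e) (g y) = linf_dist (e, b*e) y" using giso[of "(e, b*e)" y] gseam by simp
      finally show "linf_dist x (g y) \<le> linf_dist x (e, -a*e) + linf_dist (e, b*e) y" .
    next
      show "linf_dist x (c, -a*c) + linf_dist (c, b*c) y = linf_dist x (g y)"
        using c giso[of "(c, b*c)" y] gseam by simp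
    qed
  qed
  have "hyperconvex (glue_carrier {p. snd p \<ge> - a * fst p} {p. snd p \<le> b * fst p}) (pdab a b)
      \<longleftrightarrow> hyperconvex (UNIV :: (real \<times> real) set) linf_dist"
  proof (rule hc_transfer[where E="?E"])
    show "?E ` glue_carrier {p. snd p \<ge> - a * fst p} {p. snd p \<le> b * fst p} = UNIV"
    proof (intro set_eqI iffI)
      fix v :: "real \<times> real"
      show "v \<in> ?E ` glue_carrier {p. snd p \<ge> - a * fst p} {p. snd p \<le> b * fst p}"
      proof (cases "a * fst v + snd v < 0")
        case True
        then obtain y where "snd y \<le> b * fst y" "g y = v" using gsurj by blast
        then show ?thesis unfolding glue_carrier_def by (intro image_eqI[of _ _ "Inr y"]) auto
      next
        case False
        then show ?thesis unfolding glue_carrier_def by (intro image_eqI[of _ _ "Inl v"]) auto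
      qed
    qed auto
  next
    fix u v assume u: "u \<in> glue_carrier {p. snd p \<ge> - a * fst p} {p. snd p \<le> b * fst p}"
      and v: "v \<in> glue_carrier {p. snd p \<ge> - a * fst p} {p. snd p \<le> b * fst p}"
    show "pdab a b u v = linf_dist (?E u) (?E v)"
      using u v cross unfolding glue_carrier_def
      by (auto simp: giso pd_RL linf_sym)
  qed
  thus ?thesis using linf_hc by simp
qed

lemma fwd00: "hyperconvex (glue_carrier {p. snd p \<ge> - 0 * fst p} {p. snd p \<le> 0 * fst p}) (pdab 0 0)"
  by (rule fwd_generic[where g=id]) auto

lemma fwd11: "hyperconvex (glue_carrier {p. snd p \<ge> - 1 * fst p} {p. snd p \<le> 1 * fst p}) (pdab 1 1)"
proof (rule fwd_generic[where g="\<lambda>y. (snd y, - fst y)"])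
  show "linf_dist (snd u, - fst u) (snd v, - fst v) = linf_dist u v" for u v :: "real \<times> real"
    unfolding linf_dist_def by (simp add: max.commute abs_minus_commute)
  show "\<exists>y. snd y \<le> 1 * fst y \<and> (snd y, - fst y) = v" if "1 * fst v + snd v < 0" for v :: "real \<times> real"
    using that by (intro exI[of _ "(- snd v, fst v)"]) (simp add: prod_eq_iff)
qed auto



lemma contra: fixes K X P :: real
  assumes "K * X = P" "0 < P" "0 < K" "X \<le> 0" shows False
proof -
  have "K * X \<le> 0" using assms(3,4) by (simp add: mult_nonneg_nonpos)
  thus False using assms(1,2) by simp
qed

lemma bwd1:
  assumes a0: "0 \<le> a" and ab: "a \<le> b" and b1: "b < 1" and b0: "0 < b"
  shows "\<not> hyperconvex (glue_carrier {p. snd p \<ge> - a * fst p} {p. snd p \<le> b * fst p}) (pdab a b)"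
proof
  assume hc: "hyperconvex (glue_carrier {p. snd p \<ge> - a * fst p} {p. snd p \<le> b * fst p}) (pdab a b)"
  have a1: "a \<le> 1" "b \<le> 1" "0 \<le> b" using ab b1 b0 by auto
  define be where "be = 1 + b"
  have be0: "0 < be" unfolding be_def using b0 by simp
  define rp where "rp = (2 + a*b - b^2) / (2*be)"
  define rq where "rq = (2 + 2*b - 2*a + b^2 - a*b) / (2*be)"
  define rS where "rS = (2*a + 2*b + a*b + b^2) / (2*be)"
  define al where "al = (a + b) / (1 + a)"
  define mu where "mu = (a + b) / be"
  define nu where "nu = (1 - a) / be"
  have hp: "rp * (2*be) = 2 + a*b - b^2" unfolding rp_def using be0 by simp
  have hq: "rq * (2*be) = 2 + 2*b - 2*a + b^2 - a*b" unfolding rq_def using be0 by simp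
  have hS: "rS * (2*be) = 2*a + 2*b + a*b + b^2" unfolding rS_def using be0 by simp
  have hal: "al * (1 + a) = a + b" unfolding al_def using a0 by simp
  have hmu: "mu * be = a + b" unfolding mu_def using be0 by simp
  have hnu: "nu * be = 1 - a" unfolding nu_def using be0 by simp
  have bb: "b^2 \<le> b" using b0 b1 by (simp add: power2_eq_square mult_left_le_one_le)
  have abb: "a * b \<le> b^2" using ab b0 by (simp add: power2_eq_square mult_right_mono)
  have ab0: "0 \<le> a * b" using a0 b0 by simp
  have rp0: "0 \<le> rp" unfolding rp_def using be0 bb ab0 b1 by (intro divide_nonneg_pos) auto
  have rq0: "0 \<le> rq" unfolding rq_def using be0 abb ab by (intro divide_nonneg_pos) auto
  have rS0: "0 \<le> rS" unfolding rS_def using be0 ab0 a0 b0 by (intro divide_nonneg_pos) (auto simp: power2_eq_square)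
  have spq: "rp + rq = (2 + b - a) / be"
  proof -
    have "(rp + rq) * be = (2 + b - a)" using hp hq by algebra
    thus ?thesis using be0 by (simp add: field_simps)
  qed
  have spS: "rp + rS = 1 + a"
  proof -
    have "(rp + rS) * (2*be) = (1 + a) * (2*be)" using hp hS be_def by algebra
    thus ?thesis using be0 by simp
  qed
  have sqS: "rq + rS = 1 + b"
  proof -
    have "(rq + rS) * (2*be) = (1 + b) * (2*be)" using hq hS be_def by algebra
    thus ?thesis using be0 by simp
  qed
  define e0 where "e0 = - 1 / be"
  have "pdab a b (Inl (0,1)) (Inr (0,-1)) \<le> linf_dist (0,1) (e0, -a*e0) + linf_dist (e0, b*e0) (0,-1)"
    by (rule pd_le)
  also have "\<dots> \<le> (1 + b - a) / be + 1 / be"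
  proof (rule add_mono)
    have "\<bar>0 - e0\<bar> = 1 / be" unfolding e0_def using be0 by simp
    moreover have "1 / be \<le> (1 + b - a) / be" using be0 ab by (simp add: divide_right_mono)
    moreover have "1 - - a * e0 = (1 + b - a) / be" unfolding e0_def be_def using be0 be_def
      by (simp add: field_simps)
    moreover have "0 \<le> (1 + b - a) / be" using be0 a1 by simp
    ultimately show "linf_dist (0,1) (e0, -a*e0) \<le> (1 + b - a) / be" unfolding linf_le_iff by simp
    have "b * e0 - -1 = 1 / be" unfolding e0_def be_def using be0 be_def by (simp add: field_simps)
    moreover have "\<bar>e0 - 0\<bar> = 1 / be" unfolding e0_def using be0 by simp
    ultimately show "linf_dist (e0, b*e0) (0,-1) \<le> 1 / be" unfolding linf_le_iff using be0 by simp
  qed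
  also have "\<dots> = rp + rq" unfolding spq by (simp add: add_divide_distrib[symmetric])
  finally have dpq: "pdab a b (Inl (0,1)) (Inr (0,-1)) \<le> rp + rq" .
  have dpS: "pdab a b (Inl (0,1)) (Inl (1,-a)) \<le> rp + rS" unfolding spS by (simp add: linf_dist_def a0)
  have dqS0: "pdab a b (Inl (1, -a*1)) (Inr (0,-1)) = linf_dist (1, b*1) (0,-1)"
    by (rule seam_R[OF a0 a1(1) a1(3) a1(2)])
  have dqS: "pdab a b (Inl (1,-a)) (Inr (0,-1)) \<le> rq + rS"
    using dqS0 unfolding sqS by (simp add: linf_dist_def b0 less_imp_le)
  define F :: "(((real \<times> real) + (real \<times> real)) \<times> real) set" where "F = {(Inl (0,1), rp), (Inr (0,-1), rq), (Inl (1,-a), rS)}"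
  have FC: "F \<subseteq> glue_carrier {p. snd p \<ge> - a * fst p} {p. snd p \<le> b * fst p} \<times> (UNIV::real set)"
    unfolding F_def glue_carrier_def by auto
  have pw: "\<forall>(x, r)\<in>F. \<forall>(y, s)\<in>F. pdab a b x y \<le> r + s"
    unfolding F_def using dpq dpS dqS rp0 rq0 rS0 pd_sym[of a b] linf_sym[of "(1,-a)" "(0,1)"]
    by (auto simp: add.commute)
  obtain z where zC: "z \<in> glue_carrier {p. snd p \<ge> - a * fst p} {p. snd p \<le> b * fst p}"
    and zF: "\<forall>(x, r)\<in>F. pdab a b x z \<le> r"
    using mp[OF mp[OF spec[OF hc[unfolded hyperconvex_def], of F] FC] pw] by blast
  have zp: "pdab a b (Inl (0,1)) z \<le> rp" and zq: "pdab a b (Inr (0,-1)) z \<le> rq"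
    and zS: "pdab a b (Inl (1,-a)) z \<le> rS" using zF unfolding F_def by auto
  show False
  proof (cases z)
    case (Inl w)
    have w2: "1 - rp \<le> snd w" using zp Inl by (auto simp: linf_le_iff abs_le_iff)
    have w1: "1 - rS \<le> fst w" using zS Inl by (auto simp: linf_le_iff abs_le_iff)
    have al0: "0 \<le> al" "al \<le> 1" unfolding al_def using a0 b0 ab a1 by auto
    have "al * fst w + (1 - al) * snd w - (0 * fst (0::real,-1::real) + 1 * snd (0::real,-1::real))
        \<le> pdab a b (Inl w) (Inr (0,-1))"
      by (rule lip) (use al0 hal in \<open>auto simp: algebra_simps\<close>)
    also have "\<dots> \<le> rq" using zq Inl pd_sym[of a b] by metis
    finally have L: "al * fst w + (1 - al) * snd w + 1 \<le> rq" by simp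
    have M1: "al * (1 - rS) \<le> al * fst w" using w1 al0 by (simp add: mult_left_mono)
    have M2: "(1 - al) * (1 - rp) \<le> (1 - al) * snd w" using w2 al0 by (simp add: mult_left_mono)
    have E: "2*be*(1+a) * (al * (1 - rS) + (1 - al) * (1 - rp) + 1 - rq) = 2*(a+b)*(1-b)*(2+b)"
      using be_def hp hq hS hal by algebra
    have P: "0 < 2*(a+b)*(1-b)*(2+b)" using a0 b0 b1 by simp
    have K: "0 < 2*be*(1+a)" using be0 a0 by simp
    have X: "al * (1 - rS) + (1 - al) * (1 - rp) + 1 - rq \<le> 0" using M1 M2 L by linarith
    show False using contra[OF E P K X] .
  next
    case (Inr w)
    have w2: "snd w \<le> rq - 1" using zq Inr by (auto simp: linf_le_iff abs_le_iff)
    have "pdab a b (Inl (1, -a*1)) (Inr w) = linf_dist (1, b*1) w"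
      by (rule seam_R[OF a0 a1(1) a1(3) a1(2)])
    hence w1: "1 - rS \<le> fst w" using zS Inr by (auto simp: linf_le_iff abs_le_iff)
    have mu0: "0 \<le> mu" "0 \<le> nu" unfolding mu_def nu_def using a0 b0 a1 be0 by auto
    have "0 * fst (0::real,1::real) + 1 * snd (0::real,1::real) - ((- mu) * fst w + nu * snd w)
        \<le> pdab a b (Inl (0,1)) (Inr w)"
    proof (rule lip)
      have "(mu + nu) * be = 1 * be" using hmu hnu be_def by algebra
      hence "mu + nu = 1" using be0 by simp
      thus "\<bar>- mu\<bar> + \<bar>nu\<bar> \<le> 1" using mu0 by simp
      have "(- mu + b * nu) * be = (0 - a * 1) * be" using hmu hnu be_def by algebra
      moreover have "be \<noteq> 0" using be0 by simp
      ultimately show "0 - a * 1 = - mu + b * nu" by (metis mult_right_cancel)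
    qed auto
    also have "\<dots> \<le> rp" using zp Inr by simp
    finally have L: "1 + mu * fst w - nu * snd w \<le> rp" by simp
    have M1: "mu * (1 - rS) \<le> mu * fst w" using w1 mu0 by (simp add: mult_left_mono)
    have M2: "nu * snd w \<le> nu * (rq - 1)" using w2 mu0 by (simp add: mult_left_mono)
    have E: "2*be^2 * (1 + mu * (1 - rS) - nu * (rq - 1) - rp) = 2*(a+b)*(2+b)*(1-a)"
      using be_def hp hq hS hmu hnu by algebra
    have P: "0 < 2*(a+b)*(2+b)*(1-a)" using a0 b0 b1 ab by simp
    have K: "0 < 2*be^2" using be0 by simp
    have X: "1 + mu * (1 - rS) - nu * (rq - 1) - rp \<le> 0" using M1 M2 L by linarith
    show False using contra[OF E P K X] .
  qed
qed

lemma bwd2: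
  assumes a0: "0 \<le> a" and a1: "a < 1"
  shows "\<not> hyperconvex (glue_carrier {p. snd p \<ge> - a * fst p} {p. snd p \<le> 1 * fst p}) (pdab a 1)"
proof
  assume hc: "hyperconvex (glue_carrier {p. snd p \<ge> - a * fst p} {p. snd p \<le> 1 * fst p}) (pdab a 1)"
  define r1 where "r1 = 1 + a"
  define r2 where "r2 = 3/2 - a/2"
  define r3 where "r3 = 1 - a"
  have r0: "0 \<le> r1" "0 \<le> r2" "0 \<le> r3" unfolding r1_def r2_def r3_def using a0 a1 by auto
  have "pdab a 1 (Inl (-1,2)) (Inr (1,0)) \<le> linf_dist (-1,2) (1/2, -a*(1/2)) + linf_dist (1/2, 1*(1/2)) (1,0)"
    by (rule pd_le)
  also have "\<dots> \<le> (2 + a/2) + 1/2"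
    by (intro add_mono) (use a0 in \<open>auto simp: linf_dist_def\<close>)
  finally have d12: "pdab a 1 (Inl (-1,2)) (Inr (1,0)) \<le> r1 + r2" unfolding r1_def r2_def by simp
  have "pdab a 1 (Inl (-1,2)) (Inr (-1,-2)) \<le> linf_dist (-1,2) (-3/2, -a*(-3/2)) + linf_dist (-3/2, 1*(-3/2)) (-1,-2)"
    by (rule pd_le)
  also have "\<dots> \<le> (2 - 3*a/2) + 1/2"
    by (intro add_mono) (use a0 a1 in \<open>auto simp: linf_dist_def\<close>)
  finally have d23: "pdab a 1 (Inl (-1,2)) (Inr (-1,-2)) \<le> r2 + r3" unfolding r2_def r3_def by simp
  have d13: "pdab a 1 (Inr (1,0)) (Inr (-1,-2)) \<le> r1 + r3" unfolding r1_def r3_def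
    by (simp add: linf_dist_def)
  define F :: "(((real \<times> real) + (real \<times> real)) \<times> real) set"
    where "F = {(Inr (1,0), r1), (Inl (-1,2), r2), (Inr (-1,-2), r3)}"
  have FC: "F \<subseteq> glue_carrier {p. snd p \<ge> - a * fst p} {p. snd p \<le> 1 * fst p} \<times> (UNIV::real set)"
    unfolding F_def glue_carrier_def using a0 a1 by auto
  have pw: "\<forall>(x, r)\<in>F. \<forall>(y, s)\<in>F. pdab a 1 x y \<le> r + s"
    unfolding F_def using d12 d23 d13 r0 pd_sym[of a 1] linf_sym[of "(-1,-2)" "(1,0)"]
    by (auto simp: add.commute)
  obtain z where zC: "z \<in> glue_carrier {p. snd p \<ge> - a * fst p} {p. snd p \<le> 1 * fst p}"
    and zF: "\<forall>(x, r)\<in>F. pdab a 1 x z \<le> r"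
    using mp[OF mp[OF spec[OF hc[unfolded hyperconvex_def], of F] FC] pw] by blast
  have z1: "pdab a 1 (Inr (1,0)) z \<le> r1" and z2: "pdab a 1 (Inl (-1,2)) z \<le> r2"
    and z3: "pdab a 1 (Inr (-1,-2)) z \<le> r3" using zF unfolding F_def by auto
  show False
  proof (cases z)
    case (Inl w)
    have "(-1) * fst w + 0 * snd w - ((-1) * fst (1::real,0::real) + 0 * snd (1::real,0::real))
        \<le> pdab a 1 (Inl w) (Inr (1,0))"
      by (rule lip) auto
    also have "\<dots> \<le> r1" using z1 Inl pd_sym[of a 1] by metis
    finally have L1: "1 - fst w \<le> 1 + a" unfolding r1_def by simp
    have "1 * fst w + 0 * snd w - (0 * fst (-1::real,-2::real) + 1 * snd (-1::real,-2::real))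
        \<le> pdab a 1 (Inl w) (Inr (-1,-2))"
      by (rule lip) auto
    also have "\<dots> \<le> r3" using z3 Inl pd_sym[of a 1] by metis
    finally have L3: "fst w + 2 \<le> 1 - a" unfolding r3_def by simp
    show False using L1 L3 by linarith
  next
    case (Inr w)
    have w1: "- a \<le> fst w" using z1 Inr unfolding r1_def by (auto simp: linf_le_iff abs_le_iff)
    have w2: "snd w \<le> -1 - a" using z3 Inr unfolding r3_def by (auto simp: linf_le_iff abs_le_iff)
    have "0 * fst (-1::real,2::real) + 1 * snd (-1::real,2::real) - ((-(1+a)/2) * fst w + ((1-a)/2) * snd w)
        \<le> pdab a 1 (Inl (-1,2)) (Inr w)"
      by (rule lip) (use a0 a1 in \<open>auto simp: field_simps\<close>)
    also have "\<dots> \<le> r2" using z2 Inr by simp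
    finally have L: "2 + (1+a)/2 * fst w - (1-a)/2 * snd w \<le> 3/2 - a/2" unfolding r2_def by (simp add: field_simps)
    have M1: "(1+a)/2 * (-a) \<le> (1+a)/2 * fst w" using w1 a0 by (intro mult_left_mono) auto
    have M2: "(1-a)/2 * snd w \<le> (1-a)/2 * (-1 - a)" using w2 a1 by (intro mult_left_mono) auto
    have E: "(1+a)/2 * (-a) - (1-a)/2 * (-1 - a) = (1 - a - 2*(a*a))/2"
      by (simp add: field_simps)
    have "a * a \<le> 1 * a" using a0 a1 by (intro mult_right_mono) auto
    hence "a*a < 1" using a1 by simp
    have S1: "2 + ((1+a)/2 * (-a) - (1-a)/2 * (-1 - a)) \<le> 3/2 - a/2" using L M1 M2 by linarith
    have S2: "2 + (1 - a - 2*(a*a))/2 \<le> 3/2 - a/2" using S1 unfolding E .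
    have S3: "(1 - a - 2*(a*a))/2 = 1/2 - a/2 - a*a" by (simp add: field_simps)
    show False using S2 \<open>a*a < 1\<close> unfolding S3 by linarith
  qed
qed


theorem mainTheorem18:
  fixes a b :: real
  assumes "0 \<le> a" "a \<le> b" "b \<le> 1"
  shows "hyperconvex
           (glue_space {p. snd p \<ge> - a * fst p} {p. snd p \<le> b * fst p} (UNIV :: real set)
              (\<lambda>\<xi>. (\<xi>, - a * \<xi>)) (\<lambda>\<xi>. (\<xi>, b * \<xi>)))
           (glue_dist linf_dist linf_dist (UNIV :: real set)
              (\<lambda>\<xi>. (\<xi>, - a * \<xi>)) (\<lambda>\<xi>. (\<xi>, b * \<xi>)))
         \<longleftrightarrow> (a = 0 \<and> b = 0) \<or> (a = 1 \<and> b = 1)"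
proof -
  have a1: "a \<le> 1" "0 \<le> b" using assms by auto
  have key: "hyperconvex
           (glue_space {p. snd p \<ge> - a * fst p} {p. snd p \<le> b * fst p} (UNIV :: real set)
              (\<lambda>\<xi>. (\<xi>, - a * \<xi>)) (\<lambda>\<xi>. (\<xi>, b * \<xi>)))
           (glue_dist linf_dist linf_dist (UNIV :: real set)
              (\<lambda>\<xi>. (\<xi>, - a * \<xi>)) (\<lambda>\<xi>. (\<xi>, b * \<xi>)))
      \<longleftrightarrow> hyperconvex (glue_carrier {p. snd p \<ge> - a * fst p} {p. snd p \<le> b * fst p}) (pdab a b)"
    unfolding pdab_def
  proof (rule glue_hc)
    show "\<And>u v. glue_pdist linf_dist linf_dist UNIV (\<lambda>\<xi>. (\<xi>, - a * \<xi>)) (\<lambda>\<xi>. (\<xi>, b * \<xi>)) u v =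
          glue_pdist linf_dist linf_dist UNIV (\<lambda>\<xi>. (\<xi>, - a * \<xi>)) (\<lambda>\<xi>. (\<xi>, b * \<xi>)) v u"
      using pd_sym[of a b] unfolding pdab_def .
    show "\<And>u v w. (u, v) \<in> glue_rel {p. snd p \<ge> - a * fst p} {p. snd p \<le> b * fst p} UNIV
            (\<lambda>\<xi>. (\<xi>, - a * \<xi>)) (\<lambda>\<xi>. (\<xi>, b * \<xi>)) \<Longrightarrow>
          glue_pdist linf_dist linf_dist UNIV (\<lambda>\<xi>. (\<xi>, - a * \<xi>)) (\<lambda>\<xi>. (\<xi>, b * \<xi>)) v w =
          glue_pdist linf_dist linf_dist UNIV (\<lambda>\<xi>. (\<xi>, - a * \<xi>)) (\<lambda>\<xi>. (\<xi>, b * \<xi>)) u w"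
      using resp[OF assms(1) a1(1) a1(2) assms(3)] unfolding pdab_def by blast
  qed
  show ?thesis
  proof (cases "(a = 0 \<and> b = 0) \<or> (a = 1 \<and> b = 1)")
    case True
    have "hyperconvex (glue_carrier {p. snd p \<ge> - a * fst p} {p. snd p \<le> b * fst p}) (pdab a b)"
      using True fwd00 fwd11 by auto
    then show ?thesis using key True by blast
  next
    case False
    show ?thesis
    proof (cases "b < 1")
      case True
      have "0 < b" using False assms True by auto
      then show ?thesis using bwd1[OF assms(1,2) True] False key by blast
    next
      case b: False
      hence "b = 1" using assms by simp
      moreover have "a < 1" using False \<open>b = 1\<close> assms by auto
      ultimately show ?thesis using bwd2[OF assms(1)] False key by auto
    qed
  qed
qed

end
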